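(* Let $q=2^n$. For all $c\in{\mathbb F}_q$, $$\prod_{a\in\mathcal T_0}(c+a)+\prod_{b\in\mathcal T_1}(c+b)=c^{1/2}.$$
   Context: For $j\in\{0,1\}$, $\mathcal T_j=\{a\in{\mathbb F}_q^\times:\mathrm{Tr}_{{\mathbb F}_q/{\mathbb F}_2}(1/a)=j\}$. Here $c^{1/2}$ denotes the unique square root of $c$ in ${\mathbb F}_q$. *)

theory Defs
  imports Main
begin

text \<open>Absolute trace from F_q to F_2, where q = 2^n: Tr(x) = sum of x^(2^i), i < n.
  Its values lie in the prime field {0,1} of the ambient field.\<close>
definition abs_trace :: "nat \<Rightarrow> 'a::field \<Rightarrow> 'a" where
  "abs_trace n x = (\<Sum>i<n. x ^ (2 ^ i))"

definition trace_set :: "nat \<Rightarrow> 'a::field \<Rightarrow> 'a set" where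
  "trace_set n j = {a. a \<noteq> 0 \<and> abs_trace n (inverse a) = j}"

text \<open>The unique square root c^(1/2) (unique in characteristic 2 finite fields).\<close>
definition half_root :: "'a::field \<Rightarrow> 'a" where
  "half_root c = (THE r. r ^ 2 = c)"

end

theory Submission
  imports Defs "HOL-Computational_Algebra.Polynomial"
begin

lemma ofnat_card_zero: "of_nat (card (UNIV::'a::{finite,comm_ring_1} set)) = (0::'a)"
proof -
  have "(\<Sum>x\<in>UNIV. x + 1) = (\<Sum>x\<in>UNIV. (x::'a))"
    by (rule sum.reindex_bij_witness[of _ "\<lambda>x. x - 1" "\<lambda>x. x + 1"]) auto
  then show ?thesis by (simp add: sum.distrib)
qed

lemma fermat: fixes x :: "'a::{field,finite}" shows "x ^ card (UNIV::'a set) = x"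
proof (cases "x = 0")
  case True
  have "card (UNIV::'a set) > 0" by (simp add: finite_UNIV_card_ge_0)
  then show ?thesis using True by simp
next
  case False
  let ?S = "UNIV - {0::'a}"
  have "(\<Prod>y\<in>?S. x*y) = (\<Prod>y\<in>?S. y)"
    by (rule prod.reindex_bij_witness[of _ "\<lambda>y. y / x" "\<lambda>y. x*y"]) (use False in auto)
  then have "x ^ card ?S * (\<Prod>y\<in>?S. y) = 1 * (\<Prod>y\<in>?S. y)" by (simp add: prod.distrib)
  moreover have "(\<Prod>y\<in>?S. y) \<noteq> 0" by simp
  ultimately have "x ^ card ?S = 1" by (metis mult_right_cancel)
  moreover have "card ?S = card (UNIV::'a set) - 1" by (simp add: card_Diff_singleton)
  moreover have "card (UNIV::'a set) > 0" by (simp add: finite_UNIV_card_ge_0)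
  ultimately show ?thesis by (metis Suc_diff_1 mult.right_neutral power_Suc)
qed

context
  fixes n :: nat
  assumes card: "card (UNIV :: 'a::{field,finite} set) = 2 ^ n"
begin

lemma two0: "(2::'a) = 0"
proof -
  have "of_nat (2^n) = (0::'a)" using ofnat_card_zero card by metis
  then have "(2::'a)^n = 0" by simp
  then show ?thesis by simp
qed

lemma n_pos: "n \<ge> 1"
proof (rule ccontr)
  assume "\<not> n \<ge> 1"
  then have "card (UNIV::'a set) = 1" using card by simp
  moreover have "card {0::'a, 1} \<le> card (UNIV::'a set)" by (rule card_mono) auto
  ultimately show False by simp
qed

lemma dbl0: "(x::'a) + x = 0"
  using two0 by (metis mult_2 mult_zero_left)

lemma neg_eq: "- (x::'a) = x"
  using dbl0[of x] by (rule add.inverse_unique)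

lemma frob2: "((x::'a) + y)^2 = x^2 + y^2"
proof -
  have "(x+y)^2 = x^2 + 2*x*y + y^2" by (simp add: power2_sum)
  then show ?thesis using two0 by simp
qed

lemma frob: "((x::'a) + y)^(2^i) = x^(2^i) + y^(2^i)"
proof (induction i)
  case 0 then show ?case by simp
next
  case (Suc i)
  have "(x+y)^(2^Suc i) = ((x+y)^(2^i))^2" by (simp add: power_mult[symmetric] mult.commute)
  also have "\<dots> = (x^(2^i))^2 + (y^(2^i))^2" using Suc frob2 by simp
  also have "\<dots> = x^(2^Suc i) + y^(2^Suc i)" by (simp add: power_mult[symmetric] mult.commute)
  finally show ?case .
qed

lemma sum_sq: "(\<Sum>i\<in>A. f i :: 'a)^2 = (\<Sum>i\<in>A. (f i)^2)"
  by (induction A rule: infinite_finite_induct) (auto simp: frob2)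

lemma tr_sq: "(abs_trace n (x::'a))^2 = abs_trace n x"
proof -
  have "(abs_trace n x)^2 = (\<Sum>i<n. x^(2^Suc i))"
    unfolding abs_trace_def sum_sq by (simp add: power_mult[symmetric] mult.commute)
  also have "\<dots> = (\<Sum>i<n. x^(2^i))"
  proof -
    have "x^(2^n) = x" using fermat[of x] card by simp
    have "(\<Sum>i<Suc n. x^(2^i)) = x^(2^0) + (\<Sum>i<n. x^(2^Suc i))" by (rule sum.lessThan_Suc_shift)
    moreover have "(\<Sum>i<Suc n. x^(2^i)) = (\<Sum>i<n. x^(2^i)) + x^(2^n)" by simp
    ultimately show ?thesis using \<open>x^(2^n) = x\<close> by simp
  qed
  finally show ?thesis unfolding abs_trace_def .
qed

lemma tr01: "abs_trace n (x::'a) = 0 \<or> abs_trace n x = 1"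
proof -
  let ?t = "abs_trace n x"
  have "?t * (?t - 1) = 0" using tr_sq by (simp add: power2_eq_square algebra_simps)
  then show ?thesis by simp
qed

lemma tr0: "abs_trace n (0::'a) = 0"
  unfolding abs_trace_def by (rule sum.neutral) (simp add: zero_power)

definition Tp :: "'a poly" where "Tp = (\<Sum>i<n. monom 1 (2^i))"

lemma poly_Tp: "poly Tp x = abs_trace n x"
  unfolding Tp_def abs_trace_def by (simp add: poly_sum poly_monom)

lemma coeff_Tp: "coeff Tp k = (\<Sum>i<n. if 2^i = k then 1 else 0)"
  unfolding Tp_def by (simp add: coeff_sum coeff_monom)

abbreviation m where "m \<equiv> (2::nat)^(n-1)"

lemma coeff_Tp_m: "coeff Tp m = 1"
proof -
  have "coeff Tp m = (\<Sum>i<n. if i = n - 1 then 1 else 0)"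
    unfolding coeff_Tp by (intro sum.cong) auto
  also have "\<dots> = 1" using n_pos by simp
  finally show ?thesis .
qed

lemma coeff_Tp_1: "coeff Tp 1 = 1"
proof -
  have "coeff Tp 1 = (\<Sum>i<n. if i = 0 then 1 else 0)"
    unfolding coeff_Tp by (intro sum.cong) auto
  also have "\<dots> = 1" using n_pos by simp
  finally show ?thesis .
qed

lemma degree_Tp: "degree Tp \<le> m"
  unfolding Tp_def
proof (rule degree_sum_le)
  fix i assume "i \<in> {..<n}"
  then have "(2::nat)^i \<le> 2^(n-1)" by (intro power_increasing) auto
  then show "degree (monom (1::'a) (2^i)) \<le> m" by (simp add: degree_monom_eq)
qed simp

lemma m_pos: "m \<ge> 1" by simp

definition Zst :: "'a set" where "Zst = {x. abs_trace n x = 0}"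
definition Ost :: "'a set" where "Ost = {x. abs_trace n x = 1}"

lemma Z_roots: "Zst = {x. poly Tp x = 0}"
  unfolding Zst_def poly_Tp by simp

lemma O_roots: "Ost = {x. poly (Tp + 1) x = 0}"
proof -
  have "abs_trace n x + 1 = 0 \<longleftrightarrow> abs_trace n x = 1" for x :: 'a
  proof -
    have "abs_trace n x + 1 = 0 \<longleftrightarrow> abs_trace n x = - 1" by (simp add: eq_neg_iff_add_eq_0)
    then show ?thesis using neg_eq[of 1] by simp
  qed
  then show ?thesis unfolding Ost_def poly_Tp by (simp add: poly_Tp)
qed

lemma card_Z_O: "card Zst = m \<and> card Ost = m"
proof -
  have Tp0: "Tp \<noteq> 0" using coeff_Tp_m by auto
  have c1: "coeff (Tp + 1) m = 1" using coeff_Tp_m m_pos by simp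
  have Tp1: "Tp + 1 \<noteq> 0" using c1 by (metis coeff_0 zero_neq_one)
  have "card Zst \<le> m" using card_poly_roots_bound[OF Tp0] degree_Tp Z_roots by simp
  moreover have "degree (Tp + 1) \<le> m"
    using degree_add_le[of Tp m 1] degree_Tp by simp
  then have "card Ost \<le> m" using card_poly_roots_bound[OF Tp1] O_roots by simp
  moreover have "card Zst + card Ost = 2^n"
  proof -
    have "Zst \<union> Ost = UNIV" unfolding Zst_def Ost_def using tr01 by auto
    moreover have "Zst \<inter> Ost = {}" unfolding Zst_def Ost_def by auto
    ultimately show ?thesis using card card_Un_disjoint[of Zst Ost] by simp
  qed
  moreover have "(2::nat)^n = 2 * m" using n_pos by (cases n) auto
  ultimately show ?thesis by linarith
qed

lemma factor:
  fixes p :: "'a poly" and S :: "'a set"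
  assumes "coeff p m = 1" "degree p \<le> m" "card S = m" "\<And>x. x \<in> S \<Longrightarrow> poly p x = 0"
  shows "p = (\<Prod>x\<in>S. [:x, 1:])"
proof -
  have fin: "finite S" by simp
  have dq: "degree (\<Prod>x\<in>S. [:x, 1:]) = m"
    using assms(3) by (subst degree_prod_eq_sum_degree) auto
  have lq: "lead_coeff (\<Prod>x\<in>S. [:x, 1:]) = 1" by (simp add: lead_coeff_prod)
  show ?thesis
  proof (rule poly_eqI_degree_lead_coeff[of p m _ S])
    show "coeff p m = coeff (\<Prod>x\<in>S. [:x, 1:]) m" using assms(1) dq lq by simp
    show "m \<le> card S" using assms by simp
    show "degree p \<le> m" using assms by simp
    show "degree (\<Prod>x\<in>S. [:x, 1:]) \<le> m" using dq by simp
    fix z assume z: "z \<in> S"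
    have "poly (\<Prod>x\<in>S. [:x, 1:]) z = (\<Prod>x\<in>S. x + z)" by (simp add: poly_prod)
    also have "\<dots> = 0"
    proof (rule prod_zero)
      show "\<exists>a\<in>S. a + z = 0" using z dbl0[of z] by blast
    qed simp
    finally show "poly p z = poly (\<Prod>x\<in>S. [:x, 1:]) z" using assms(4) z by simp
  qed
qed

lemma Tp_factor: "Tp = (\<Prod>x\<in>Zst. [:x, 1:])"
  by (rule factor) (use coeff_Tp_m degree_Tp card_Z_O Z_roots in auto)

lemma Tp1_factor: "Tp + 1 = (\<Prod>x\<in>Ost. [:x, 1:])"
proof (rule factor)
  show "coeff (Tp + 1) m = 1" using coeff_Tp_m m_pos by simp
  show "degree (Tp + 1) \<le> m" using degree_add_le[of Tp m 1] degree_Tp by simp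
qed (use card_Z_O O_roots in auto)

lemma F1: "(\<Prod>x\<in>Zst. x + d) = abs_trace n d"
proof -
  have "poly Tp d = (\<Prod>x\<in>Zst. x + d)" by (subst Tp_factor) (simp add: poly_prod)
  then show ?thesis using poly_Tp by simp
qed

lemma F2: "(\<Prod>x\<in>Ost. x + d) = abs_trace n d + 1"
proof -
  have "poly (Tp + 1) d = (\<Prod>x\<in>Ost. x + d)" by (subst Tp1_factor) (simp add: poly_prod)
  then show ?thesis using poly_Tp by simp
qed

lemma F4: "(\<Prod>x\<in>Ost. x) = 1"
  using F2[of 0] tr0 by simp

lemma zeroZ: "(0::'a) \<in> Zst" unfolding Zst_def using tr0 by simp

lemma F3: "(\<Prod>x\<in>Zst - {0}. x) = 1"
proof -
  let ?R = "\<Prod>x\<in>Zst - {0}. [:x, 1:]"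
  have e: "(\<Prod>x\<in>Zst. [:x, 1:]) = [:0,1:] * ?R" by (rule prod.remove) (simp_all add: zeroZ)
  have "Tp = pCons 0 ?R" unfolding Tp_factor e by simp
  then have "coeff Tp 1 = coeff ?R 0" by simp
  also have "\<dots> = poly ?R 0" by (simp add: poly_0_coeff_0)
  also have "\<dots> = (\<Prod>x\<in>Zst - {0}. x)" by (simp add: poly_prod)
  finally show ?thesis using coeff_Tp_1 by simp
qed

lemma half_root_eq: "half_root (c::'a) = c ^ m"
  unfolding half_root_def
proof (rule the_equality)
  have e: "m * 2 = 2^n" using n_pos by (cases n) auto
  have "(c ^ m)^2 = c ^ (2^n)" by (simp only: power_mult[symmetric] e)
  then show "(c ^ m)^2 = c" using fermat[of c] card by simp
  fix r assume r: "r^2 = c"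
  have "(r + c^m)^2 = 0" using frob2[of r "c^m"] r \<open>(c ^ m)^2 = c\<close> dbl0 by simp
  then have "r + c^m = 0" by simp
  then have "r = - (c^m)" by (simp add: eq_neg_iff_add_eq_0)
  then show "r = c^m" using neg_eq by simp
qed

lemma ts0: "trace_set n (0::'a) = inverse ` (Zst - {0})"
  unfolding trace_set_def Zst_def
  apply (auto simp: image_iff)
  apply (rule_tac x="inverse x" in bexI; simp)
  done

lemma ts1: "trace_set n (1::'a) = inverse ` Ost"
proof -
  have "0 \<notin> Ost" unfolding Ost_def using tr0 by simp
  then show ?thesis unfolding trace_set_def Ost_def
    apply (auto simp: image_iff)
    apply (metis inverse_inverse_eq)
    done
qed

lemma inj_inv: "inj_on (inverse :: 'a \<Rightarrow> 'a) A"
  by (rule inj_onI) simp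

lemma main: "(\<Prod>a\<in>trace_set n (0::'a). c + a) + (\<Prod>b\<in>trace_set n (1::'a). c + b) = half_root c"
proof -
  have A: "(\<Prod>a\<in>trace_set n (0::'a). c + a) = (\<Prod>x\<in>Zst - {0}. c + inverse x)"
    unfolding ts0 by (simp add: prod.reindex[OF inj_inv])
  have B: "(\<Prod>b\<in>trace_set n (1::'a). c + b) = (\<Prod>x\<in>Ost. c + inverse x)"
    unfolding ts1 by (simp add: prod.reindex[OF inj_inv])
  have O0: "0 \<notin> Ost" unfolding Ost_def using tr0 by simp
  have I0: "(\<Prod>x\<in>Zst - {0}. inverse x) = 1" using F3 prod_inversef[of "\<lambda>x. x" "Zst - {0}"] by (simp add: o_def)
  have I1: "(\<Prod>x\<in>Ost. inverse x) = 1" using F4 prod_inversef[of "\<lambda>x. x" Ost] by (simp add: o_def)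
  have cZ: "card (Zst - {0}) = m - 1" using card_Z_O zeroZ by (simp add: card_Diff_singleton)
  show ?thesis
  proof (cases "c = 0")
    case True
    have "(2::'a) = 0" by (rule two0)
    then show ?thesis unfolding A B half_root_eq using True I0 I1 by simp
  next
    case False
    define d where "d = inverse c"
    have cd: "c * d = 1" using False d_def by simp
    have eq: "c + inverse x = c * (x + d) * inverse x" if "x \<noteq> 0" for x
      using that False unfolding d_def by (simp add: field_simps)
    have "(\<Prod>x\<in>Zst - {0}. c + inverse x) = (\<Prod>x\<in>Zst - {0}. c * (x + d) * inverse x)"
      by (rule prod.cong) (auto simp: eq)
    also have "\<dots> = c ^ (m - 1) * (\<Prod>x\<in>Zst - {0}. x + d)"
      unfolding prod.distrib prod_constant I0 cZ by simp
    finally have P1: "(\<Prod>x\<in>Zst - {0}. c + inverse x) = c ^ (m - 1) * (\<Prod>x\<in>Zst - {0}. x + d)" .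
    have "abs_trace n d = (0 + d) * (\<Prod>x\<in>Zst - {0}. x + d)"
      using F1[of d] prod.remove[of Zst 0 "\<lambda>x. x + d"] zeroZ by simp
    then have h: "c * abs_trace n d = (\<Prod>x\<in>Zst - {0}. x + d)" using cd by (simp add: mult.assoc[symmetric])
    have "(\<Prod>x\<in>Zst - {0}. c + inverse x) = c ^ (m - 1) * (c * abs_trace n d)"
      unfolding P1 h ..
    also have "\<dots> = (c ^ (m - 1) * c) * abs_trace n d" by (simp only: mult.assoc)
    also have "\<dots> = c ^ m * abs_trace n d" using power_minus_mult[of m c] m_pos by simp
    finally have P1': "(\<Prod>x\<in>Zst - {0}. c + inverse x) = c ^ m * abs_trace n d" .
    have "(\<Prod>x\<in>Ost. c + inverse x) = (\<Prod>x\<in>Ost. c * (x + d) * inverse x)"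
      by (rule prod.cong[OF refl]) (metis eq O0)
    also have "\<dots> = c ^ m * (abs_trace n d + 1)"
      unfolding prod.distrib prod_constant I1 F2 using card_Z_O by simp
    finally have P2: "(\<Prod>x\<in>Ost. c + inverse x) = c ^ m * (abs_trace n d + 1)" .
    have "c ^ m * abs_trace n d + c ^ m * (abs_trace n d + 1) = c ^ m * ((abs_trace n d + abs_trace n d) + 1)"
      by (simp add: algebra_simps)
    also have "\<dots> = c ^ m" using dbl0 by simp
    finally show ?thesis unfolding A B half_root_eq P1' P2 .
  qed
qed

end

theorem theorem7p8:
  fixes c :: "'a::{field,finite}" and n :: nat
  assumes "card (UNIV :: 'a set) = 2 ^ n"
  shows "(\<Prod>a\<in>trace_set n (0::'a). c + a) + (\<Prod>b\<in>trace_set n (1::'a). c + b) = half_root c"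
  using main[OF assms] .

end
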